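(* Let $N\equiv 2\pmod 4$, $q=e^{2\pi i/N}$, $\rho=\sum_{j=1}^n(n-j+\tfrac12)\epsilon_j$, and let $W$ be the group of signed permutations of $\epsilon_1,\dots,\epsilon_n$ (the Weyl group of $osp(1|2n)$) and $\epsilon':W\to\{\pm1\}$ any function. Set $c=\big(\sum_{\lambda\in(\mathbb{Z}/N\mathbb{Z})^n}q^{(\lambda,\lambda+2\rho)}\big)^{-1}$ (well defined by nonvanishing of this sum) and $x_\lambda=c\,q^{-(\lambda,2\rho)}$. For $\lambda,\mu\in\mathbb{Z}^n$ define $$S'_{\lambda,\mu}=\sum_{\sigma\in W}\epsilon'(\sigma)\,q^{2(\lambda+\rho,\sigma(\mu+\rho))},\qquad Q_\mu=\sum_{\sigma\in W}\epsilon'(\sigma)\,q^{2(\rho,\sigma(\mu+\rho))}.$$ Then for every $\mu\in\mathbb{Z}^n$, $$\sum_{\lambda\in(\mathbb{Z}/N\mathbb{Z})^n}x_\lambda\,q^{(\lambda,\lambda+2\rho)}\,S'_{\lambda,\mu}=Q_\mu\,q^{-(\mu,\mu+2\rho)},$$ where the summand is independent of the choice of representative of $\lambda$ modulo $N$.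
   Context: $(\cdot,\cdot)$ is the standard inner product with orthonormal basis $\epsilon_1,\dots,\epsilon_n$. $W$ acts on $\mathbb{R}^n$ by permuting coordinates and changing their signs. $\rho$ is the Weyl vector of $osp(1|2n)$: half the sum of the even positive roots $\epsilon_i\pm\epsilon_j$ $(i<j)$, $2\epsilon_k$, minus half the sum of the odd positive roots $\epsilon_k$. *)

theory Defs
  imports Complex_Main "HOL-Combinatorics.Permutations" "HOL-Library.FuncSet"
begin

text \<open>Vectors in R^n are functions nat => real, only coordinates 0..n-1 matter
  (coordinate i corresponds to epsilon_(i+1)).\<close>

definition qpow :: "nat \<Rightarrow> real \<Rightarrow> complex" where
  "qpow N r = exp (2 * of_real pi * \<i> * of_real r / of_nat N)"

definition inner_n :: "nat \<Rightarrow> (nat \<Rightarrow> real) \<Rightarrow> (nat \<Rightarrow> real) \<Rightarrow> real" where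
  "inner_n n a b = (\<Sum>i<n. a i * b i)"

text \<open>rho = sum_(j=1..n) (n - j + 1/2) eps_j; with 0-based index i = j - 1.\<close>
definition rho :: "nat \<Rightarrow> nat \<Rightarrow> real" where
  "rho n i = real n - real i - 1/2"

definition signed_perms :: "nat \<Rightarrow> ((nat \<Rightarrow> nat) \<times> (nat \<Rightarrow> int)) set" where
  "signed_perms n = {(p, s). p permutes {..<n} \<and> s \<in> (\<Pi>\<^sub>E i\<in>{..<n}. {-1, 1})}"

definition wact :: "(nat \<Rightarrow> nat) \<times> (nat \<Rightarrow> int) \<Rightarrow> (nat \<Rightarrow> real) \<Rightarrow> (nat \<Rightarrow> real)" where
  "wact \<sigma> v = (\<lambda>i. of_int (snd \<sigma> i) * v (fst \<sigma> i))"

definition residue_box :: "nat \<Rightarrow> nat \<Rightarrow> (nat \<Rightarrow> int) set" where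
  "residue_box n N = (\<Pi>\<^sub>E i\<in>{..<n}. {0..<int N})"

definition qform :: "nat \<Rightarrow> (nat \<Rightarrow> int) \<Rightarrow> real" where
  "qform n l = inner_n n (\<lambda>i. of_int (l i)) (\<lambda>i. of_int (l i) + 2 * rho n i)"

definition cconst :: "nat \<Rightarrow> nat \<Rightarrow> complex" where
  "cconst n N = inverse (\<Sum>l\<in>residue_box n N. qpow N (qform n l))"

definition xcoef :: "nat \<Rightarrow> nat \<Rightarrow> (nat \<Rightarrow> int) \<Rightarrow> complex" where
  "xcoef n N l = cconst n N * qpow N (- inner_n n (\<lambda>i. of_int (l i)) (\<lambda>i. 2 * rho n i))"

definition Sprime :: "nat \<Rightarrow> nat \<Rightarrow> ((nat \<Rightarrow> nat) \<times> (nat \<Rightarrow> int) \<Rightarrow> int)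
    \<Rightarrow> (nat \<Rightarrow> int) \<Rightarrow> (nat \<Rightarrow> int) \<Rightarrow> complex" where
  "Sprime n N eps l m = (\<Sum>\<sigma>\<in>signed_perms n. of_int (eps \<sigma>) *
      qpow N (2 * inner_n n (\<lambda>i. of_int (l i) + rho n i) (wact \<sigma> (\<lambda>i. of_int (m i) + rho n i))))"

definition Qcoef :: "nat \<Rightarrow> nat \<Rightarrow> ((nat \<Rightarrow> nat) \<times> (nat \<Rightarrow> int) \<Rightarrow> int)
    \<Rightarrow> (nat \<Rightarrow> int) \<Rightarrow> complex" where
  "Qcoef n N eps m = (\<Sum>\<sigma>\<in>signed_perms n. of_int (eps \<sigma>) *
      qpow N (2 * inner_n n (rho n) (wact \<sigma> (\<lambda>i. of_int (m i) + rho n i))))"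

definition summand :: "nat \<Rightarrow> nat \<Rightarrow> ((nat \<Rightarrow> nat) \<times> (nat \<Rightarrow> int) \<Rightarrow> int)
    \<Rightarrow> (nat \<Rightarrow> int) \<Rightarrow> (nat \<Rightarrow> int) \<Rightarrow> complex" where
  "summand n N eps m l = xcoef n N l * qpow N (qform n l) * Sprime n N eps l m"

end

theory Submission
  imports Defs "HOL-Analysis.Analysis"
begin

lemma qpow_add: "qpow N (a + b) = qpow N a * qpow N b"
  unfolding qpow_def by (simp add: add_divide_distrib distrib_left exp_add)

lemma qpow_neg: "qpow N (- a) = inverse (qpow N a)"
  unfolding qpow_def by (simp add: exp_minus)

lemma qpow_diff: "qpow N (a - b) = qpow N a / qpow N b"
  using qpow_add[of N a "-b"] by (simp add: qpow_neg divide_inverse)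

lemma qpow_nz: "qpow N a \<noteq> 0"
  unfolding qpow_def by simp

lemma qpow_0[simp]: "qpow N 0 = 1"
  unfolding qpow_def by simp

lemma qpow_sum: "qpow N (\<Sum>i\<in>A. f i) = (\<Prod>i\<in>A. qpow N (f i))"
  unfolding qpow_def by (cases "finite A") (simp_all add: sum_distrib_left sum_divide_distrib exp_sum)

lemma qpow_Nint: assumes "N > 0" shows "qpow N (real N * of_int t) = 1"
proof -
  have "2 * of_real pi * \<i> * of_real (real N * of_int t) / of_nat N
        = \<i> * (of_int t * (of_real pi * 2))" using assms by (simp add: field_simps)
  then show ?thesis unfolding qpow_def by simp
qed

lemma qpow_per: assumes "N > 0" shows "qpow N (a + real N * of_int t) = qpow N a"
  using qpow_Nint[OF assms] by (simp add: qpow_add)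

lemma qpow_eq1: assumes "N > 0" "qpow N a = 1" shows "\<exists>t::int. a = real N * of_int t"
proof -
  from assms(2) obtain k :: int where "Im (2 * of_real pi * \<i> * of_real a / of_nat N) = of_int (2*k) * pi"
    unfolding qpow_def exp_eq_1 by blast
  then have "2 * pi * a / N = 2 * k * pi" by simp
  then have "a = N * k" using assms(1) pi_gt_zero by (simp add: field_simps)
  then show ?thesis by (intro exI[of _ k]) simp
qed

lemma per_mod:
  fixes F :: "int \<Rightarrow> 'a"
  assumes per: "\<And>x. F (x + int N) = F x"
  shows "F (y + int N * t) = F y"
proof (induction t rule: int_induct[where k=0])
  case base then show ?case by simp
next
  case (step1 i)
  have "F (y + int N * (i + 1)) = F (y + int N * i + int N)" by (simp add: algebra_simps)
  then show ?case using per step1 by simp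
next
  case (step2 i)
  have "F (y + int N * i) = F (y + int N * (i - 1) + int N)" by (simp add: algebra_simps)
  then show ?case using per step2 by simp
qed

lemma per_mod2:
  fixes F :: "int \<Rightarrow> 'a"
  assumes per: "\<And>x. F (x + int N) = F x"
  shows "F (y mod int N) = F y"
  using per_mod[of F N, OF per, of "y mod int N" "y div int N"] by simp

lemma per_shift:
  fixes F :: "int \<Rightarrow> 'a::comm_monoid_add"
  assumes N: "N > 0" and per: "\<And>x. F (x + int N) = F x"
  shows "(\<Sum>k\<in>{0..<int N}. F (k + a)) = (\<Sum>k\<in>{0..<int N}. F k)"
proof -
  have b: "bij_betw (\<lambda>k. (k + a) mod int N) {0..<int N} {0..<int N}"
  proof (rule bij_betwI[where g="\<lambda>k. (k - a) mod int N"])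
    show "(\<lambda>k. (k + a) mod int N) \<in> {0..<int N} \<rightarrow> {0..<int N}" using N by auto
    show "(\<lambda>k. (k - a) mod int N) \<in> {0..<int N} \<rightarrow> {0..<int N}" using N by auto
    fix x assume "x \<in> {0..<int N}"
    then show "((x + a) mod int N - a) mod int N = x"
      by (simp add: mod_diff_left_eq)
  next
    fix y assume "y \<in> {0..<int N}"
    then show "((y - a) mod int N + a) mod int N = y"
      by (simp add: mod_add_left_eq)
  qed
  have "(\<Sum>k\<in>{0..<int N}. F (k + a)) = (\<Sum>k\<in>{0..<int N}. F ((k + a) mod int N))"
    using per_mod2[of F N, OF per] by simp
  also have "\<dots> = (\<Sum>k\<in>{0..<int N}. F k)"
    by (rule sum.reindex_bij_betw[OF b])
  finally show ?thesis .
qed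

definition gs :: "nat \<Rightarrow> complex" where
  "gs N = (\<Sum>k\<in>{0..<int N}. qpow N ((of_int k + 1/2)^2))"

lemma gs_shift:
  assumes N: "N > 0"
  shows "(\<Sum>k\<in>{0..<int N}. qpow N ((of_int k + (of_int a + 1/2))^2)) = gs N"
proof -
  let ?F = "\<lambda>x::int. qpow N ((of_int x + 1/2)^2)"
  have per: "?F (x + int N) = ?F x" for x
  proof -
    have "(of_int (x + int N) + 1/2)^2 = (of_int x + 1/2 :: real)^2 + real N * of_int (2*x + 1 + int N)"
      by (simp add: power2_eq_square algebra_simps)
    then show "qpow N ((of_int (x + int N) + 1/2)^2) = qpow N ((of_int x + 1/2)^2)"
      by (simp only: qpow_per[OF N])
  qed
  have "(\<Sum>k\<in>{0..<int N}. qpow N ((of_int k + (of_int a + 1/2))^2)) = (\<Sum>k\<in>{0..<int N}. ?F (k + a))"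
    by (simp add: add.assoc)
  also have "\<dots> = gs N" unfolding gs_def using per_shift[of N ?F, OF N per] by simp
  finally show ?thesis .
qed

lemma box_sum:
  assumes N: "N > 0" and w: "\<forall>i<n. \<exists>a::int. w i = of_int a + 1/2"
  shows "(\<Sum>l\<in>residue_box n N. qpow N (\<Sum>i<n. (of_int (l i) + w i)^2)) = gs N ^ n"
proof -
  have "(\<Sum>l\<in>residue_box n N. qpow N (\<Sum>i<n. (of_int (l i) + w i)^2))
      = (\<Sum>l\<in>residue_box n N. \<Prod>i<n. qpow N ((of_int (l i) + w i)^2))"
    by (simp add: qpow_sum)
  also have "\<dots> = (\<Prod>i<n. \<Sum>k\<in>{0..<int N}. qpow N ((of_int k + w i)^2))"
    unfolding residue_box_def by (rule prod_sum_PiE[symmetric]) auto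
  also have "\<dots> = (\<Prod>i<n. gs N)"
  proof (rule prod.cong[OF refl])
    fix i assume "i \<in> {..<n}"
    then obtain a :: int where "w i = of_int a + 1/2" using w by auto
    then show "(\<Sum>k\<in>{0..<int N}. qpow N ((of_int k + w i)^2)) = gs N" using gs_shift[OF N] by simp
  qed
  finally show ?thesis by simp
qed

lemma cnj_qpow: "cnj (qpow N r) = qpow N (- r)"
  unfolding qpow_def by (subst exp_cnj) simp

lemma orth:
  assumes N: "N > 0" and d: "0 \<le> d" "d < int N"
  shows "(\<Sum>k\<in>{0..<int N}. qpow N (2 * of_int d * of_int k)) = (if d = 0 \<or> 2*d = int N then of_nat N else 0)"
proof (cases "d = 0 \<or> 2*d = int N")
  case True
  have "qpow N (2 * of_int d * of_int k) = 1" for k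
  proof (cases "d = 0")
    case False
    then have "2 * real_of_int d = real N" using True
      by (metis of_int_eq_iff of_int_mult of_int_numeral of_int_of_nat_eq)
    then have e: "2 * of_int d * of_int k = real N * of_int k" by simp
    show ?thesis by (simp only: e qpow_Nint[OF N])
  qed simp
  then show ?thesis using True by simp
next
  case False
  let ?F = "\<lambda>k::int. qpow N (2 * of_int d * of_int k)"
  let ?T = "\<Sum>k\<in>{0..<int N}. ?F k"
  have per: "?F (x + int N) = ?F x" for x
  proof -
    have e: "2 * of_int d * of_int (x + int N) = 2 * of_int d * of_int x + real N * of_int (2*d)"
      by (simp add: algebra_simps)
    show "qpow N (2 * of_int d * of_int (x + int N)) = qpow N (2 * of_int d * of_int x)"
      by (simp only: e qpow_per[OF N])
  qed
  have "?T * qpow N (2 * of_int d) = (\<Sum>k\<in>{0..<int N}. ?F (k + 1))"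
    unfolding sum_distrib_right
  proof (rule sum.cong[OF refl])
    fix k show "?F k * qpow N (2 * of_int d) = ?F (k + 1)"
      by (simp add: qpow_add[symmetric] algebra_simps)
  qed
  also have "\<dots> = ?T" using per_shift[of N ?F 1, OF N per] by simp
  finally have eq: "?T * (qpow N (2 * of_int d) - 1) = 0" by (simp add: algebra_simps)
  have "qpow N (2 * of_int d) \<noteq> 1"
  proof
    assume "qpow N (2 * of_int d) = 1"
    then obtain t :: int where t: "2 * real_of_int d = real N * of_int t" using qpow_eq1[OF N] by blast
    then have ti: "2 * d = int N * t" by (metis of_int_eq_iff of_int_mult of_int_numeral of_int_of_nat_eq)
    have "t = 0 \<or> t = 1"
    proof -
      have "int N * t \<ge> 0" "int N * t < int N * 2" using ti d by linarith+
      then have "t \<ge> 0" "t < 2" using N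
        by (simp_all add: zero_le_mult_iff) 
      then show ?thesis by auto
    qed
    then show False using ti False by auto
  qed
  then show ?thesis using eq False by simp
qed

lemma gs_nz:
  assumes N4: "N mod 4 = 2"
  shows "gs N \<noteq> 0"
proof -
  have N: "N > 0" using N4 by (cases N) auto
  have "N = 4*(N div 4) + 2" using N4 by presburger
  then have u: "int N = 4*int (N div 4) + 2" by linarith
  define u where "u = int (N div 4)"
  note u = u[folded u_def]
  define M where "M = 2*u + 1"
  have NM: "int N = 2*M" using u M_def by simp
  have M0: "M \<noteq> 0" "0 \<le> M" "M < int N" using NM M_def N by auto
  let ?f = "\<lambda>j::int. (of_int j + 1/2 :: real)^2"
  have A: "gs N * cnj (gs N) = (\<Sum>k\<in>{0..<int N}. \<Sum>j\<in>{0..<int N}. qpow N (?f j - ?f k))"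
    unfolding gs_def cnj_sum cnj_qpow sum_product qpow_add[symmetric]
    by (subst sum.swap) simp
  have B: "(\<Sum>j\<in>{0..<int N}. qpow N (?f j - ?f k))
      = (\<Sum>d\<in>{0..<int N}. qpow N ((of_int d)^2 + of_int d) * qpow N (2 * of_int d * of_int k))" for k
  proof -
    let ?F = "\<lambda>j. qpow N (?f j - ?f k)"
    have per: "?F (x + int N) = ?F x" for x
    proof -
      have e: "?f (x + int N) - ?f k = (?f x - ?f k) + real N * of_int (2*x + 1 + int N)"
        by (simp add: power2_eq_square algebra_simps)
      show "qpow N (?f (x + int N) - ?f k) = qpow N (?f x - ?f k)"
        by (simp only: e qpow_per[OF N])
    qed
    have "(\<Sum>j\<in>{0..<int N}. ?F j) = (\<Sum>d\<in>{0..<int N}. ?F (d + k))"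
      by (rule per_shift[of N ?F k, OF N per, symmetric])
    also have "\<dots> = (\<Sum>d\<in>{0..<int N}. qpow N ((of_int d)^2 + of_int d) * qpow N (2 * of_int d * of_int k))"
    proof (rule sum.cong[OF refl])
      fix d
      have "?f (d + k) - ?f k = ((of_int d)^2 + of_int d) + 2 * of_int d * of_int k"
        by (simp add: power2_eq_square algebra_simps)
      then show "?F (d + k) = qpow N ((of_int d)^2 + of_int d) * qpow N (2 * of_int d * of_int k)"
        by (simp add: qpow_add)
    qed
    finally show ?thesis .
  qed
  have C: "gs N * cnj (gs N) = (\<Sum>d\<in>{0..<int N}. qpow N ((of_int d)^2 + of_int d) *
             (\<Sum>k\<in>{0..<int N}. qpow N (2 * of_int d * of_int k)))"
    unfolding A B sum_distrib_left by (rule sum.swap)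
  also have "\<dots> = (\<Sum>d\<in>{0..<int N}. (if d = 0 then of_nat N else 0) + (if d = M then of_nat N else 0))"
  proof (rule sum.cong[OF refl])
    fix d assume d: "d \<in> {0..<int N}"
    have qM: "qpow N ((of_int M)^2 + of_int M) = 1"
    proof -
      have "(of_int M)^2 + of_int M = real N * of_int (u + 1)"
      proof -
        have "M^2 + M = int N * (u+1)" using NM M_def by (simp add: power2_eq_square algebra_simps)
        then have "real_of_int (M^2 + M) = real_of_int (int N * (u+1))" by simp
        then show ?thesis by simp
      qed
      then show ?thesis by (simp only: qpow_Nint[OF N])
    qed
    show "qpow N ((of_int d)^2 + of_int d) * (\<Sum>k\<in>{0..<int N}. qpow N (2 * of_int d * of_int k))
       = (if d = 0 then of_nat N else 0) + (if d = M then of_nat N else 0)"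
    proof -
      have o: "(\<Sum>k\<in>{0..<int N}. qpow N (2 * of_int d * of_int k)) = (if d = 0 \<or> 2*d = int N then of_nat N else 0)"
        using d orth[OF N, of d] by simp
      consider "d = 0" | "d = M" | "d \<noteq> 0" "d \<noteq> M" by blast
      then show ?thesis
      proof cases
        case 1 then show ?thesis using o M0 by simp
      next
        case 2
        then have "2*d = int N" "d \<noteq> 0" using NM M0 by simp_all
        then show ?thesis using o 2 qM by simp
      next
        case 3
        then have "\<not> (d = 0 \<or> 2*d = int N)" using NM by simp
        then show ?thesis using o 3 by simp
      qed
    qed
  qed
  also have "\<dots> = 2 * of_nat N"
    using M0 by (simp add: sum.distrib sum.delta)
  finally have "gs N * cnj (gs N) = 2 * of_nat N" .
  moreover have "(2 * of_nat N :: complex) \<noteq> 0" using N by simp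
  ultimately have "gs N * cnj (gs N) \<noteq> 0" by simp
  then show ?thesis by auto
qed

definition nu :: "nat \<Rightarrow> (nat \<Rightarrow> int) \<Rightarrow> nat \<Rightarrow> real" where
  "nu n m = (\<lambda>i. of_int (m i) + rho n i)"

lemma sp_D: assumes "\<sigma> \<in> signed_perms n"
  shows "fst \<sigma> permutes {..<n}" "\<And>i. i < n \<Longrightarrow> snd \<sigma> i = 1 \<or> snd \<sigma> i = -1"
  using assms unfolding signed_perms_def by (auto simp: PiE_iff)

lemma w_half:
  assumes "\<sigma> \<in> signed_perms n"
  shows "\<forall>i<n. \<exists>a::int. wact \<sigma> (nu n m) i = of_int a + 1/2"
proof (intro allI impI)
  fix i assume i: "i < n"
  define b where "b = m (fst \<sigma> i) + int n - int (fst \<sigma> i) - 1"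
  have v: "nu n m (fst \<sigma> i) = of_int b + 1/2" unfolding nu_def rho_def b_def by simp
  from sp_D(2)[OF assms i] show "\<exists>a::int. wact \<sigma> (nu n m) i = of_int a + 1/2"
  proof
    assume "snd \<sigma> i = 1"
    then show ?thesis unfolding wact_def v by auto
  next
    assume "snd \<sigma> i = -1"
    then have "wact \<sigma> (nu n m) i = of_int (- b - 1) + 1/2" unfolding wact_def v by simp
    then show ?thesis by blast
  qed
qed

lemma rho_half: "\<forall>i<n. \<exists>a::int. rho n i = of_int a + 1/2"
proof (intro allI impI)
  fix i assume "i < n"
  have "rho n i = of_int (int n - int i - 1) + 1/2" unfolding rho_def by simp
  then show "\<exists>a::int. rho n i = of_int a + 1/2" by blast
qed

lemma norm_w:
  assumes "\<sigma> \<in> signed_perms n"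
  shows "(\<Sum>i<n. (wact \<sigma> v i)^2) = (\<Sum>i<n. (v i)^2)"
proof -
  have "(\<Sum>i<n. (wact \<sigma> v i)^2) = (\<Sum>i<n. (v (fst \<sigma> i))^2)"
  proof (rule sum.cong[OF refl])
    fix i assume "i \<in> {..<n}"
    then have "snd \<sigma> i = 1 \<or> snd \<sigma> i = -1" using sp_D(2)[OF assms] by auto
    then show "(wact \<sigma> v i)^2 = (v (fst \<sigma> i))^2" unfolding wact_def by auto
  qed
  also have "\<dots> = (\<Sum>i<n. (v i)^2)"
    using sum.permute[OF sp_D(1)[OF assms], of "\<lambda>i. (v i)^2"] by (simp add: comp_def)
  finally show ?thesis .
qed

definition Ex :: "nat \<Rightarrow> (nat \<Rightarrow> int) \<Rightarrow> (nat \<Rightarrow> nat) \<times> (nat \<Rightarrow> int) \<Rightarrow> real" where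
  "Ex n m \<sigma> = 2 * inner_n n (rho n) (wact \<sigma> (nu n m)) - (\<Sum>i<n. (nu n m i)^2)"

lemma exp_id:
  assumes "\<sigma> \<in> signed_perms n"
  shows "- inner_n n (\<lambda>i. of_int (l i)) (\<lambda>i. 2 * rho n i) + qform n l
     + 2 * inner_n n (\<lambda>i. of_int (l i) + rho n i) (wact \<sigma> (nu n m))
     = Ex n m \<sigma> + (\<Sum>i<n. (of_int (l i) + wact \<sigma> (nu n m) i)^2)"
proof -
  let ?w = "wact \<sigma> (nu n m)"
  have L: "- inner_n n (\<lambda>i. of_int (l i)) (\<lambda>i. 2 * rho n i) + qform n l
     + 2 * inner_n n (\<lambda>i. of_int (l i) + rho n i) ?w
     = (\<Sum>i<n. - (of_int (l i) * (2 * rho n i)) + of_int (l i) * (of_int (l i) + 2 * rho n i)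
          + 2 * ((of_int (l i) + rho n i) * ?w i))"
    unfolding inner_n_def qform_def sum_distrib_left sum_negf[symmetric] sum.distrib[symmetric] ..
  have R: "Ex n m \<sigma> + (\<Sum>i<n. (of_int (l i) + ?w i)^2)
     = (\<Sum>i<n. 2 * (rho n i * ?w i) - (?w i)^2 + (of_int (l i) + ?w i)^2)"
    unfolding Ex_def inner_n_def norm_w[OF assms, of "nu n m", symmetric] sum_distrib_left
      sum_subtractf[symmetric] sum.distrib[symmetric] ..
  show ?thesis unfolding L R
    by (rule sum.cong[OF refl]) (simp add: power2_eq_square algebra_simps)
qed

lemma summand_formula:
  "summand n N eps m l = cconst n N * (\<Sum>\<sigma>\<in>signed_perms n. of_int (eps \<sigma>) * qpow N (Ex n m \<sigma>)
      * qpow N (\<Sum>i<n. (of_int (l i) + wact \<sigma> (nu n m) i)^2))"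
proof -
  have "summand n N eps m l = cconst n N * (\<Sum>\<sigma>\<in>signed_perms n. of_int (eps \<sigma>) *
     (qpow N (- inner_n n (\<lambda>i. of_int (l i)) (\<lambda>i. 2 * rho n i)) * qpow N (qform n l) *
      qpow N (2 * inner_n n (\<lambda>i. of_int (l i) + rho n i) (wact \<sigma> (nu n m)))))"
    unfolding summand_def xcoef_def Sprime_def nu_def
    by (simp add: sum_distrib_left algebra_simps)
  also have "\<dots> = cconst n N * (\<Sum>\<sigma>\<in>signed_perms n. of_int (eps \<sigma>) * qpow N (Ex n m \<sigma>)
      * qpow N (\<Sum>i<n. (of_int (l i) + wact \<sigma> (nu n m) i)^2))"
  proof (intro arg_cong[where f="\<lambda>x. cconst n N * x"] sum.cong refl)
    fix \<sigma> assume s: "\<sigma> \<in> signed_perms n"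
    show "of_int (eps \<sigma>) *
     (qpow N (- inner_n n (\<lambda>i. of_int (l i)) (\<lambda>i. 2 * rho n i)) * qpow N (qform n l) *
      qpow N (2 * inner_n n (\<lambda>i. of_int (l i) + rho n i) (wact \<sigma> (nu n m)))) =
      of_int (eps \<sigma>) * qpow N (Ex n m \<sigma>)
      * qpow N (\<Sum>i<n. (of_int (l i) + wact \<sigma> (nu n m) i)^2)"
      using exp_id[OF s, of l m] by (simp add: qpow_add[symmetric] mult.assoc)
  qed
  finally show ?thesis .
qed

lemma cong_eq:
  assumes N: "N > 0" and c: "l mod int N = l' mod int N" and w: "w = of_int a + 1/2"
  shows "qpow N ((of_int l + w)^2) = qpow N ((of_int l' + w)^2)"
proof -
  have "int N dvd (l - l')" using c by (simp add: mod_eq_dvd_iff)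
  then obtain t where t: "l - l' = int N * t" by (auto elim: dvdE)
  then have lt: "l = l' + int N * t" by simp
  have e: "(of_int l + w)^2 = (of_int l' + w)^2 + real N * of_int (t * (l + l' + 2*a + 1))"
    unfolding w lt by (simp add: power2_eq_square algebra_simps)
  show ?thesis by (simp only: e qpow_per[OF N])
qed

lemma inv_l:
  assumes N: "N > 0" and s: "\<sigma> \<in> signed_perms n" and c: "\<forall>i<n. l i mod int N = l' i mod int N"
  shows "qpow N (\<Sum>i<n. (of_int (l i) + wact \<sigma> (nu n m) i)^2)
       = qpow N (\<Sum>i<n. (of_int (l' i) + wact \<sigma> (nu n m) i)^2)"
  unfolding qpow_sum
proof (rule prod.cong[OF refl])
  fix i assume i0: "i \<in> {..<n}"
  then have i: "i < n" by simp
  with w_half[OF s] obtain a :: int where a: "wact \<sigma> (nu n m) i = of_int a + 1/2" by blast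
  show "qpow N ((of_int (l i) + wact \<sigma> (nu n m) i)^2) = qpow N ((of_int (l' i) + wact \<sigma> (nu n m) i)^2)"
    by (rule cong_eq[OF N c[rule_format, OF i] a])
qed

lemma qform_sq: "qform n l = (\<Sum>i<n. (of_int (l i) + rho n i)^2) - (\<Sum>i<n. (rho n i)^2)"
  unfolding qform_def inner_n_def
  by (simp add: sum_subtractf[symmetric]) (rule sum.cong[OF refl], simp add: power2_eq_square algebra_simps)

lemma cconst_eq:
  assumes N: "N > 0"
  shows "cconst n N = inverse (qpow N (- (\<Sum>i<n. (rho n i)^2)) * gs N ^ n)"
proof -
  have "(\<Sum>l\<in>residue_box n N. qpow N (qform n l))
     = (\<Sum>l\<in>residue_box n N. qpow N (- (\<Sum>i<n. (rho n i)^2)) * qpow N (\<Sum>i<n. (of_int (l i) + rho n i)^2))"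
    by (simp add: qform_sq qpow_add[symmetric])
  also have "\<dots> = qpow N (- (\<Sum>i<n. (rho n i)^2)) * gs N ^ n"
    by (simp add: sum_distrib_left[symmetric] box_sum[OF N rho_half])
  finally show ?thesis unfolding cconst_def by simp
qed

theorem mainTheorem7:
  fixes n N :: nat and eps :: "(nat \<Rightarrow> nat) \<times> (nat \<Rightarrow> int) \<Rightarrow> int"
    and m :: "nat \<Rightarrow> int"
  assumes "N mod 4 = 2"
    and "\<forall>\<sigma>\<in>signed_perms n. eps \<sigma> \<in> {-1, 1}"
  shows "(\<forall>l l' :: nat \<Rightarrow> int. (\<forall>i<n. l i mod int N = l' i mod int N)
            \<longrightarrow> summand n N eps m l = summand n N eps m l')
       \<and> (\<Sum>l\<in>residue_box n N. summand n N eps m l)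
           = Qcoef n N eps m * qpow N (- qform n m)"
proof
  have N: "N > 0" using assms(1) by (cases N) auto
  show "\<forall>l l' :: nat \<Rightarrow> int. (\<forall>i<n. l i mod int N = l' i mod int N)
            \<longrightarrow> summand n N eps m l = summand n N eps m l'"
  proof (intro allI impI)
    fix l l' :: "nat \<Rightarrow> int" assume c: "\<forall>i<n. l i mod int N = l' i mod int N"
    show "summand n N eps m l = summand n N eps m l'"
      unfolding summand_formula using inv_l[OF N _ c] by (intro arg_cong[where f="\<lambda>x. cconst n N * x"] sum.cong) auto
  qed
  let ?R = "\<Sum>i<n. (rho n i)^2"
  let ?V = "\<Sum>i<n. (nu n m i)^2"
  have g: "gs N \<noteq> 0" by (rule gs_nz[OF assms(1)])
  have "(\<Sum>l\<in>residue_box n N. summand n N eps m l)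
     = cconst n N * (\<Sum>\<sigma>\<in>signed_perms n. of_int (eps \<sigma>) * qpow N (Ex n m \<sigma>)
      * (\<Sum>l\<in>residue_box n N. qpow N (\<Sum>i<n. (of_int (l i) + wact \<sigma> (nu n m) i)^2)))"
    unfolding summand_formula sum_distrib_left[symmetric]
    by (subst sum.swap) (simp add: sum_distrib_left mult.assoc)
  also have "\<dots> = cconst n N * (\<Sum>\<sigma>\<in>signed_perms n. of_int (eps \<sigma>) * qpow N (Ex n m \<sigma>) * gs N ^ n)"
    by (intro arg_cong[where f="\<lambda>x. cconst n N * x"] sum.cong refl) (simp add: box_sum[OF N w_half])
  also have "\<dots> = (\<Sum>\<sigma>\<in>signed_perms n. of_int (eps \<sigma>) *
      qpow N (2 * inner_n n (rho n) (wact \<sigma> (nu n m))) * qpow N (?R - ?V))"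
    unfolding cconst_eq[OF N] sum_distrib_left
  proof (rule sum.cong[OF refl])
    fix \<sigma>
    have "qpow N (Ex n m \<sigma>) = qpow N (2 * inner_n n (rho n) (wact \<sigma> (nu n m))) * qpow N (?R - ?V) * qpow N (- ?R)"
      unfolding Ex_def qpow_add[symmetric] by simp
    then show "inverse (qpow N (- ?R) * gs N ^ n) * (of_int (eps \<sigma>) * qpow N (Ex n m \<sigma>) * gs N ^ n) =
       of_int (eps \<sigma>) * qpow N (2 * inner_n n (rho n) (wact \<sigma> (nu n m))) * qpow N (?R - ?V)"
      using g qpow_nz[of N "- ?R"] by (simp add: field_simps)
  qed
  also have "\<dots> = Qcoef n N eps m * qpow N (- qform n m)"
  proof -
    have "- qform n m = ?R - ?V" unfolding qform_sq nu_def by simp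
    then show ?thesis unfolding Qcoef_def nu_def sum_distrib_right by simp
  qed
  finally show "(\<Sum>l\<in>residue_box n N. summand n N eps m l) = Qcoef n N eps m * qpow N (- qform n m)" .
qed

end
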